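(* Let $\delta\geq0$, $0\leq2\theta<\alpha$, $\varepsilon>0$ with $\varepsilon^{\alpha-2\theta}=\frac14$, and $$\lambda_\pm=\frac{|\xi|^{2\theta}}{2(1+|\xi|^{2\delta})}\left(-1\pm\sqrt{1-4|\xi|^{2(\alpha-2\theta)}(1+|\xi|^{2\delta})}\right).$$ If $|\xi|<\varepsilon$ then: (i) $-4(2-\sqrt2)|\xi|^{2(\alpha-\theta)}\leq\lambda_+\leq-|\xi|^{2(\alpha-\theta)}$ (so $\lambda_+\approx-|\xi|^{2(\alpha-\theta)}$); (ii) $-|\xi|^{2\theta}\leq\lambda_-\leq-\frac14\left(1+\frac1{\sqrt2}\right)|\xi|^{2\theta}$ (so $\lambda_-\approx-|\xi|^{2\theta}$); (iii) $\lambda_+-\lambda_-\approx|\xi|^{2\theta}$.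
   Context: $g\approx f$ means $g\lesssim f$ and $f\lesssim g$, where $f\lesssim g$ means $0\leq f\leq Cg$ for a constant $C>0$ independent of $\xi$ (for negative quantities, $\lambda\approx-h$ means $-\lambda\approx h$). *)

theory Defs
  imports "HOL-Analysis.Analysis"
begin

definition lam_plus :: "real \<Rightarrow> real \<Rightarrow> real \<Rightarrow> 'a::euclidean_space \<Rightarrow> real" where
  "lam_plus \<alpha> \<theta> \<delta> \<xi> =
     norm \<xi> powr (2*\<theta>) / (2 * (1 + norm \<xi> powr (2*\<delta>))) *
     (-1 + sqrt (1 - 4 * norm \<xi> powr (2*(\<alpha> - 2*\<theta>)) * (1 + norm \<xi> powr (2*\<delta>))))"

definition lam_minus :: "real \<Rightarrow> real \<Rightarrow> real \<Rightarrow> 'a::euclidean_space \<Rightarrow> real" where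
  "lam_minus \<alpha> \<theta> \<delta> \<xi> =
     norm \<xi> powr (2*\<theta>) / (2 * (1 + norm \<xi> powr (2*\<delta>))) *
     (-1 - sqrt (1 - 4 * norm \<xi> powr (2*(\<alpha> - 2*\<theta>)) * (1 + norm \<xi> powr (2*\<delta>))))"

end

theory Submission
  imports Defs
begin
lemma key:
  fixes s q D w :: real
  assumes s: "s>0" and q: "q>0" "q<1/16" and D: "1\<le>D" "D\<le>2" and w: "w = sqrt(1-4*q*D)"
  shows "-4*(2 - sqrt 2) * (s*q) \<le> s/(2*D)*(-1+w)"
    "s/(2*D)*(-1+w) \<le> -(s*q)"
    "-s \<le> s/(2*D)*(-1-w)"
    "s/(2*D)*(-1-w) \<le> -(1/4)*(1 + 1/sqrt 2) * s"
    "s/4 \<le> s/(2*D)*(-1+w) - s/(2*D)*(-1-w)"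
    "s/(2*D)*(-1+w) - s/(2*D)*(-1-w) \<le> s"
proof -
  have h: "1-4*q*D \<ge> 1/2" proof -
    have "q*D \<le> q*2" using q D by (intro mult_left_mono) auto
    thus ?thesis using q by linarith
  qed
  have w2: "w^2 = 1-4*q*D" using h w by simp
  have w0: "w \<ge> sqrt (1/2)" using h w real_sqrt_le_mono by blast
  have s2: "sqrt (1/2) = 1/sqrt 2" by (simp add: real_sqrt_divide)
  have w1: "w \<le> 1" using w q D by simp
  have r2: "sqrt 2 \<le> 3/2" by (rule real_le_lsqrt) (auto simp: power2_eq_square)
  have r2b: "sqrt 2 > 1" by simp
  have wh: "w \<ge> 1/2" proof -
    have "sqrt (1/4) \<le> w" using h w real_sqrt_le_mono by force
    moreover have "sqrt (1/4) = (1/2::real)" by (simp add: real_sqrt_divide)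
    ultimately show ?thesis by simp
  qed
  have Dp: "D > 0" using D by simp
  have e1: "s/(2*D)*(-1+w) = - s*(1-w)/(2*D)" by (simp add: field_simps)
  have qq: "2*q*D = (1-w)*(1+w)/2" using w2 by (simp add: algebra_simps power2_eq_square)
  show "s/(2*D)*(-1+w) \<le> -(s*q)"
  proof -
    have "(1-w)*(1+w) \<le> (1-w)*2" using w1 wh by (intro mult_left_mono) auto
    hence "(1-w)*(1+w)/2 \<le> 1-w" by simp
    hence "2*q*D \<le> 1 - w" using qq by simp
    hence "s*(2*q*D) \<le> s*(1-w)" using s by (intro mult_left_mono) auto
    hence "s*q*(2*D) \<le> s*(1-w)" by (simp add: mult_ac)
    thus ?thesis using Dp e1 by (simp add: field_simps)
  qed
  show "-4*(2 - sqrt 2) * (s*q) \<le> s/(2*D)*(-1+w)"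
  proof -
    have "1 \<le> (4-2* sqrt 2)*(1+w)"
    proof -
      have "(4-2* sqrt 2)*1 \<le> (4-2* sqrt 2)*(1+w)" using r2 wh by (intro mult_left_mono) auto
      hence "4-2* sqrt 2 \<le> (4-2* sqrt 2)*(1+w)" by simp
      thus ?thesis using r2 by linarith
    qed
    hence "(1-w)*1 \<le> (1-w)*((4-2* sqrt 2)*(1+w))" using w1 by (intro mult_left_mono) auto
    hence "1-w \<le> (4-2* sqrt 2)*((1-w)*(1+w))" by (simp add: algebra_simps)
    moreover have "(8-4* sqrt 2)*(2*q*D) = (4-2* sqrt 2)*((1-w)*(1+w))"
      by (subst qq) (simp add: field_simps)
    ultimately have "1-w \<le> (8-4* sqrt 2)*(2*q*D)" by simp
    hence "s*(1-w) \<le> s*((8-4* sqrt 2)*(2*q*D))" using s by (simp add: mult_left_mono)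
    thus ?thesis using Dp e1 by (simp add: field_simps)
  qed
  show "-s \<le> s/(2*D)*(-1-w)"
  proof -
    have "s*(1+w) \<le> s*(2*D)" using s w1 D by (intro mult_left_mono) auto
    thus ?thesis using Dp by (simp add: field_simps)
  qed
  show "s/(2*D)*(-1-w) \<le> -(1/4)*(1 + 1/sqrt 2) * s"
  proof -
    have "(1 + 1/sqrt 2)* s*(2*D) \<le> 4*(s*(1+w))"
    proof -
      have "(1 + 1/sqrt 2)* s*(2*D) \<le> (1+w)* s*4" using w0 s2 D s wh
        by (intro mult_mono) auto
      thus ?thesis by simp
    qed
    thus ?thesis using Dp by (simp add: field_simps)
  qed
  show "s/4 \<le> s/(2*D)*(-1+w) - s/(2*D)*(-1-w)"
  proof -
    have "s*D \<le> s*(4*w)" using s wh D by (intro mult_left_mono) auto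
    thus ?thesis using Dp by (simp add: field_simps)
  qed
  show "s/(2*D)*(-1+w) - s/(2*D)*(-1-w) \<le> s"
  proof -
    have "s*w \<le> s*D" using s w1 D by (intro mult_left_mono) auto
    thus ?thesis using Dp by (simp add: field_simps)
  qed
qed
theorem lemma2p2:
  fixes \<alpha> \<theta> \<delta> \<epsilon> :: real
  assumes "\<delta> \<ge> 0" and "0 \<le> 2*\<theta>" and "2*\<theta> < \<alpha>" and "\<epsilon> > 0"
    and "\<epsilon> powr (\<alpha> - 2*\<theta>) = 1/4"
  shows "(\<forall>\<xi>::'a::euclidean_space. \<xi> \<noteq> 0 \<and> norm \<xi> < \<epsilon> \<longrightarrow>
            -4*(2 - sqrt 2) * norm \<xi> powr (2*(\<alpha>-\<theta>)) \<le> lam_plus \<alpha> \<theta> \<delta> \<xi> \<and>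
            lam_plus \<alpha> \<theta> \<delta> \<xi> \<le> - (norm \<xi> powr (2*(\<alpha>-\<theta>))) \<and>
            - (norm \<xi> powr (2*\<theta>)) \<le> lam_minus \<alpha> \<theta> \<delta> \<xi> \<and>
            lam_minus \<alpha> \<theta> \<delta> \<xi> \<le> -(1/4)*(1 + 1/sqrt 2) * norm \<xi> powr (2*\<theta>))
       \<and> (\<exists>c C. 0 < c \<and> 0 < C \<and>
            (\<forall>\<xi>::'a. \<xi> \<noteq> 0 \<and> norm \<xi> < \<epsilon> \<longrightarrow>
               c * norm \<xi> powr (2*\<theta>) \<le> lam_plus \<alpha> \<theta> \<delta> \<xi> - lam_minus \<alpha> \<theta> \<delta> \<xi> \<and>
               lam_plus \<alpha> \<theta> \<delta> \<xi> - lam_minus \<alpha> \<theta> \<delta> \<xi> \<le> C * norm \<xi> powr (2*\<theta>)))"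
proof -
  have b: "\<alpha> - 2*\<theta> > 0" using assms by simp
  have e1: "\<epsilon> < 1"
  proof (rule ccontr)
    assume "\<not> \<epsilon> < 1"
    hence "\<epsilon> powr (\<alpha> - 2*\<theta>) \<ge> 1" using b by (intro ge_one_powr_ge_zero) auto
    thus False using assms(5) by simp
  qed
  have main: "-4*(2 - sqrt 2) * norm \<xi> powr (2*(\<alpha>-\<theta>)) \<le> lam_plus \<alpha> \<theta> \<delta> \<xi> \<and>
            lam_plus \<alpha> \<theta> \<delta> \<xi> \<le> - (norm \<xi> powr (2*(\<alpha>-\<theta>))) \<and>
            - (norm \<xi> powr (2*\<theta>)) \<le> lam_minus \<alpha> \<theta> \<delta> \<xi> \<and>
            lam_minus \<alpha> \<theta> \<delta> \<xi> \<le> -(1/4)*(1 + 1/sqrt 2) * norm \<xi> powr (2*\<theta>) \<and>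
            (1/4) * norm \<xi> powr (2*\<theta>) \<le> lam_plus \<alpha> \<theta> \<delta> \<xi> - lam_minus \<alpha> \<theta> \<delta> \<xi> \<and>
               lam_plus \<alpha> \<theta> \<delta> \<xi> - lam_minus \<alpha> \<theta> \<delta> \<xi> \<le> 1 * norm \<xi> powr (2*\<theta>)"
    if xi: "\<xi> \<noteq> 0 \<and> norm \<xi> < \<epsilon>" for \<xi> :: 'a
  proof -
    define r where "r = norm \<xi>"
    have r0: "r > 0" using xi r_def by simp
    have re: "r < \<epsilon>" using xi r_def by simp
    define s where "s = r powr (2*\<theta>)"
    define q where "q = r powr (2*(\<alpha> - 2*\<theta>))"
    define D where "D = 1 + r powr (2*\<delta>)"
    define w where "w = sqrt (1 - 4*q*D)"
    have s0: "s > 0" using r0 s_def by simp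
    have q0: "q > 0" using r0 q_def by simp
    have qsq: "q = r powr (\<alpha> - 2*\<theta>) * r powr (\<alpha> - 2*\<theta>)"
      unfolding q_def by (subst powr_add[symmetric]) simp
    have rb: "r powr (\<alpha> - 2*\<theta>) < 1/4"
      using powr_less_mono2[OF b, of r \<epsilon>] r0 re assms(5) by simp
    have rb0: "r powr (\<alpha> - 2*\<theta>) \<ge> 0" by simp
    have q1: "q < 1/16"
    proof -
      have "r powr (\<alpha> - 2*\<theta>) * r powr (\<alpha> - 2*\<theta>) \<le> r powr (\<alpha> - 2*\<theta>) * (1/4)"
        using rb rb0 by (intro mult_left_mono) auto
      thus ?thesis using qsq rb by linarith
    qed
    have D1: "1 \<le> D" using D_def by simp
    have D2: "D \<le> 2"
    proof -
      have "r powr (2*\<delta>) \<le> 1 powr (2*\<delta>)" using assms(1) r0 re e1 by (intro powr_mono2) auto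
      thus ?thesis using D_def by simp
    qed
    have sq: "s*q = r powr (2*(\<alpha>-\<theta>))"
      unfolding s_def q_def by (subst powr_add[symmetric]) (simp add: algebra_simps)
    have lp: "lam_plus \<alpha> \<theta> \<delta> \<xi> = s/(2*D)*(-1+w)"
      unfolding lam_plus_def s_def q_def D_def w_def r_def by simp
    have lm: "lam_minus \<alpha> \<theta> \<delta> \<xi> = s/(2*D)*(-1-w)"
      unfolding lam_minus_def s_def q_def D_def w_def r_def by simp
    note k = key[OF s0 q0 q1 D1 D2 w_def]
    have Teq: "norm \<xi> powr (2*(\<alpha>-\<theta>)) = s*q" using sq r_def by simp
    have seq: "norm \<xi> powr (2*\<theta>) = s" using s_def r_def by simp
    show ?thesis unfolding lp lm Teq seq using k by simp
  qed
  show ?thesis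
  proof (intro conjI)
    show "\<forall>\<xi>::'a. \<xi> \<noteq> 0 \<and> norm \<xi> < \<epsilon> \<longrightarrow>
            -4*(2 - sqrt 2) * norm \<xi> powr (2*(\<alpha>-\<theta>)) \<le> lam_plus \<alpha> \<theta> \<delta> \<xi> \<and>
            lam_plus \<alpha> \<theta> \<delta> \<xi> \<le> - (norm \<xi> powr (2*(\<alpha>-\<theta>))) \<and>
            - (norm \<xi> powr (2*\<theta>)) \<le> lam_minus \<alpha> \<theta> \<delta> \<xi> \<and>
            lam_minus \<alpha> \<theta> \<delta> \<xi> \<le> -(1/4)*(1 + 1/sqrt 2) * norm \<xi> powr (2*\<theta>)"
      using main by blast
    show "\<exists>c C. 0 < c \<and> 0 < C \<and>
            (\<forall>\<xi>::'a. \<xi> \<noteq> 0 \<and> norm \<xi> < \<epsilon> \<longrightarrow>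
               c * norm \<xi> powr (2*\<theta>) \<le> lam_plus \<alpha> \<theta> \<delta> \<xi> - lam_minus \<alpha> \<theta> \<delta> \<xi> \<and>
               lam_plus \<alpha> \<theta> \<delta> \<xi> - lam_minus \<alpha> \<theta> \<delta> \<xi> \<le> C * norm \<xi> powr (2*\<theta>))"
      by (rule exI[of _ "1/4"], rule exI[of _ 1]) (use main in auto)
  qed
qed

end
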